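(* Let $G$ be a factor graph with evidence $\mathbf{E}$ in which all factors are known. Then the colour passing (CP) algorithm and the LIFG algorithm (for any threshold $\theta\in[0,1]$) output identical groupings of random variables and of factors, respectively.
   Context: A factor graph (FG) is a bipartite undirected graph with variable nodes (random variables, each with a finite range $\mathcal R(R)$, possibly observed as evidence) and factor nodes; a factor $f$ has an ordered argument list of random variables (its neighbours) and, if known, a potential function mapping each joint assignment of its arguments to a positive real; an unknown factor is one whose potential mapping is not known. $\mathrm{Ne}_G(v)$ denotes the neighbours of node $v$. The 2-step neighbourhood of a factor $f$ is $\mathrm{Ne}^2(f)=\mathrm{Ne}_G(f)\cup\{f' : \exists R\in \mathrm{Ne}_G(f),\ f'\in\mathrm{Ne}_G(R)\}$. For factors $f_i,f_j$, their induced 2-step neighbourhoods are symmetric if $|\mathrm{Ne}_G(f_i)|=|\mathrm{Ne}_G(f_j)|$ and there is a bijection $\mathrm{Ne}_G(f_i)\to\mathrm{Ne}_G(f_j)$ mapping each $R_k$ to some $R_\ell$ with identical evidence, equal ranges, and $|\mathrm{Ne}_G(R_k)|=|\mathrm{Ne}_G(R_\ell)|$; $f_i\approx f_j$ (possibly identical) if their induced 2-step neighbourhoods are symmetric and either one of them is unknown or both have the same potentials. The colour passing (CP) algorithm: random variables are initially coloured so that variables with identical range and identical evidence share a colour; factors are initially coloured so that factors with identical potentials share a colour (or given initial colours). Then repeatedly: each factor receives the colours of its argument variables (in order) and is recoloured according to this signature together with its own colour; each variable receives the pairs (colour of neighbouring factor, its position in that factor's argument list) and is recoloured according to this signature together with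 its own colour; iterate until the colour-class partitions no longer change, and group variables and factors by final colour. The LIFG algorithm, with input $G,\mathbf{E}$ and threshold $\theta\in[0,1]$: (1) assign each known factor a colour based on its potentials; (2) assign each unknown factor a unique colour; (3) for each unknown factor $f_i$, set $C_{f_i}=\emptyset$, and for each factor $f_j\neq f_i$ with $f_i\approx f_j$: if $f_j$ is unknown assign $f_j$ the colour of $f_i$, otherwise add $f_j$ to $C_{f_i}$; (4) for each $C_{f_i}$, let $C^\ell_{f_i}$ be a maximal subset of $C_{f_i}$ whose elements are pairwise possibly identical, and if $|C^\ell_{f_i}|/|C_{f_i}|\ge\theta$ assign all factors in $C^\ell_{f_i}$ the colour of $f_i$; (5) run CP on $G$ with these factor colours and evidence $\mathbf{E}$, and output the resulting grouping. *)

theory Defs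
  imports Complex_Main "HOL-Library.Multiset"
begin

text \<open>A factor graph: finite set of random variables, finite set of factors,
  each factor with an ordered argument list, each variable with a finite range,
  each factor with an optional potential (None = unknown factor).
  A potential maps a joint assignment (list of values, one per argument)
  to a positive real; by convention it is 0 outside the joint range, so that two
  potentials are identical iff they are equal as functions.\<close>

record ('v, 'f, 'a) fgraph =
  fvars :: "'v set"
  ffacs :: "'f set"
  fargs :: "'f \<Rightarrow> 'v list"
  frng  :: "'v \<Rightarrow> 'a set"
  fpot  :: "'f \<Rightarrow> ('a list \<Rightarrow> real) option"

type_synonym ('v, 'a) evidence = "'v \<Rightarrow> 'a option"

definition joint_assignments :: "('v, 'f, 'a) fgraph \<Rightarrow> 'f \<Rightarrow> 'a list set" where
  "joint_assignments G f = {xs. length xs = length (fargs G f) \<and>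
      (\<forall>i < length xs. xs ! i \<in> frng G (fargs G f ! i))}"

definition wf_fg :: "('v, 'f, 'a) fgraph \<Rightarrow> ('v, 'a) evidence \<Rightarrow> bool" where
  "wf_fg G E \<longleftrightarrow>
     finite (fvars G) \<and> finite (ffacs G) \<and>
     (\<forall>v \<in> fvars G. finite (frng G v) \<and> frng G v \<noteq> {}) \<and>
     (\<forall>f \<in> ffacs G. set (fargs G f) \<subseteq> fvars G \<and> distinct (fargs G f)) \<and>
     (\<forall>f \<in> ffacs G. \<forall>p. fpot G f = Some p \<longrightarrow>
        (\<forall>xs. (xs \<in> joint_assignments G f \<longrightarrow> p xs > 0) \<and>
              (xs \<notin> joint_assignments G f \<longrightarrow> p xs = 0))) \<and>
     (\<forall>v \<in> fvars G. \<forall>x. E v = Some x \<longrightarrow> x \<in> frng G v) \<and>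
     (\<forall>v. v \<notin> fvars G \<longrightarrow> E v = None)"

definition ne_fac :: "('v, 'f, 'a) fgraph \<Rightarrow> 'f \<Rightarrow> 'v set" where
  "ne_fac G f = set (fargs G f)"

definition ne_var :: "('v, 'f, 'a) fgraph \<Rightarrow> 'v \<Rightarrow> 'f set" where
  "ne_var G R = {f \<in> ffacs G. R \<in> set (fargs G f)}"

text \<open>Colourings are represented by the induced "same colour" relations.
  A CP state is a pair (relation on variables, relation on factors).\<close>

type_synonym ('v, 'f) cstate = "('v \<Rightarrow> 'v \<Rightarrow> bool) \<times> ('f \<Rightarrow> 'f \<Rightarrow> bool)"

definition fclass :: "('v, 'f, 'a) fgraph \<Rightarrow> ('f \<Rightarrow> 'f \<Rightarrow> bool) \<Rightarrow> 'f \<Rightarrow> 'f set" where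
  "fclass G RF f = {g \<in> ffacs G. RF f g}"

text \<open>Message received by a variable: multiset of pairs
  (colour of neighbouring factor, position of the variable in its argument list).\<close>

definition var_sig :: "('v, 'f, 'a) fgraph \<Rightarrow> ('f \<Rightarrow> 'f \<Rightarrow> bool) \<Rightarrow> 'v \<Rightarrow> ('f set \<times> nat) multiset" where
  "var_sig G RF v = image_mset (\<lambda>(f, i). (fclass G RF f, i))
      (mset_set {(f, i). f \<in> ffacs G \<and> i < length (fargs G f) \<and> fargs G f ! i = v})"

definition cp_step :: "('v, 'f, 'a) fgraph \<Rightarrow> ('v, 'f) cstate \<Rightarrow> ('v, 'f) cstate" where
  "cp_step G S =
     (let RV = fst S; RF = snd S;
          RF' = (\<lambda>f g. RF f g \<and> length (fargs G f) = length (fargs G g) \<and>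
                   (\<forall>i < length (fargs G f). RV (fargs G f ! i) (fargs G g ! i)));
          RV' = (\<lambda>v w. RV v w \<and> var_sig G RF' v = var_sig G RF' w)
      in (RV', RF'))"

definition partition_of :: "'x set \<Rightarrow> ('x \<Rightarrow> 'x \<Rightarrow> bool) \<Rightarrow> 'x set set" where
  "partition_of A R = (\<lambda>x. {y \<in> A. R x y}) ` A"

definition groupings :: "('v, 'f, 'a) fgraph \<Rightarrow> ('v, 'f) cstate \<Rightarrow> 'v set set \<times> 'f set set" where
  "groupings G S = (partition_of (fvars G) (fst S), partition_of (ffacs G) (snd S))"

definition cp_init :: "('v, 'f, 'a) fgraph \<Rightarrow> ('v, 'a) evidence \<Rightarrow> ('f \<Rightarrow> 'c) \<Rightarrow> ('v, 'f) cstate" where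
  "cp_init G E colF =
     ((\<lambda>v w. frng G v = frng G w \<and> E v = E w), (\<lambda>f g. colF f = colF g))"

definition colour_passing ::
  "('v, 'f, 'a) fgraph \<Rightarrow> ('v, 'a) evidence \<Rightarrow> ('f \<Rightarrow> 'c) \<Rightarrow> 'v set set \<times> 'f set set" where
  "colour_passing G E colF =
     (let st = (\<lambda>k. (cp_step G ^^ k) (cp_init G E colF));
          n = (LEAST k. groupings G (st (Suc k)) = groupings G (st k))
      in groupings G (st n))"

definition CP :: "('v, 'f, 'a) fgraph \<Rightarrow> ('v, 'a) evidence \<Rightarrow> 'v set set \<times> 'f set set" where
  "CP G E = colour_passing G E (fpot G)"

definition sym_2step :: "('v, 'f, 'a) fgraph \<Rightarrow> ('v, 'a) evidence \<Rightarrow> 'f \<Rightarrow> 'f \<Rightarrow> bool" where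
  "sym_2step G E fi fj \<longleftrightarrow>
     card (ne_fac G fi) = card (ne_fac G fj) \<and>
     (\<exists>h. bij_betw h (ne_fac G fi) (ne_fac G fj) \<and>
        (\<forall>R \<in> ne_fac G fi. E (h R) = E R \<and> frng G (h R) = frng G R \<and>
                            card (ne_var G R) = card (ne_var G (h R))))"

definition poss_ident :: "('v, 'f, 'a) fgraph \<Rightarrow> ('v, 'a) evidence \<Rightarrow> 'f \<Rightarrow> 'f \<Rightarrow> bool" where
  "poss_ident G E fi fj \<longleftrightarrow> sym_2step G E fi fj \<and>
     (fpot G fi = None \<or> fpot G fj = None \<or> fpot G fi = fpot G fj)"

datatype ('f, 'a) lcolour = PotCol "'a list \<Rightarrow> real" | UniqCol 'f

definition unknown_facs :: "('v, 'f, 'a) fgraph \<Rightarrow> 'f set" where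
  "unknown_facs G = {f \<in> ffacs G. fpot G f = None}"

definition cand_set :: "('v, 'f, 'a) fgraph \<Rightarrow> ('v, 'a) evidence \<Rightarrow> 'f \<Rightarrow> 'f set" where
  "cand_set G E fi = {fj \<in> ffacs G. fj \<noteq> fi \<and> poss_ident G E fi fj \<and> fpot G fj \<noteq> None}"

definition lifg_col0 :: "('v, 'f, 'a) fgraph \<Rightarrow> 'f \<Rightarrow> ('f, 'a) lcolour" where
  "lifg_col0 G f = (case fpot G f of Some p \<Rightarrow> PotCol p | None \<Rightarrow> UniqCol f)"

definition lifg_step3 :: "('v, 'f, 'a) fgraph \<Rightarrow> ('v, 'a) evidence \<Rightarrow>
    ('f \<Rightarrow> ('f, 'a) lcolour) \<Rightarrow> 'f \<Rightarrow> ('f \<Rightarrow> ('f, 'a) lcolour)" where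
  "lifg_step3 G E col fi =
     (\<lambda>fj. if fj \<in> ffacs G \<and> fj \<noteq> fi \<and> poss_ident G E fi fj \<and> fpot G fj = None
           then col fi else col fj)"

definition lifg_step4 :: "('v, 'f, 'a) fgraph \<Rightarrow> ('v, 'a) evidence \<Rightarrow> real \<Rightarrow> ('f \<Rightarrow> 'f set) \<Rightarrow>
    ('f \<Rightarrow> ('f, 'a) lcolour) \<Rightarrow> 'f \<Rightarrow> ('f \<Rightarrow> ('f, 'a) lcolour)" where
  "lifg_step4 G E \<theta> sel col fi =
     (if real (card (sel fi)) / real (card (cand_set G E fi)) \<ge> \<theta>
      then (\<lambda>fj. if fj \<in> sel fi then col fi else col fj) else col)"

definition valid_order :: "('v, 'f, 'a) fgraph \<Rightarrow> 'f list \<Rightarrow> bool" where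
  "valid_order G ord \<longleftrightarrow> distinct ord \<and> set ord = unknown_facs G"

definition valid_sel :: "('v, 'f, 'a) fgraph \<Rightarrow> ('v, 'a) evidence \<Rightarrow> ('f \<Rightarrow> 'f set) \<Rightarrow> bool" where
  "valid_sel G E sel \<longleftrightarrow> (\<forall>fi \<in> unknown_facs G.
      sel fi \<subseteq> cand_set G E fi \<and> pairwise (poss_ident G E) (sel fi) \<and>
      (\<forall>S \<subseteq> cand_set G E fi. pairwise (poss_ident G E) S \<longrightarrow> card S \<le> card (sel fi)))"

definition LIFG :: "('v, 'f, 'a) fgraph \<Rightarrow> ('v, 'a) evidence \<Rightarrow> real \<Rightarrow> 'f list \<Rightarrow> ('f \<Rightarrow> 'f set)
    \<Rightarrow> 'v set set \<times> 'f set set" where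
  "LIFG G E \<theta> ord sel =
     (let c3 = foldl (lifg_step3 G E) (lifg_col0 G) ord;
          c4 = foldl (lifg_step4 G E \<theta> sel) c3 ord
      in colour_passing G E c4)"

end

theory Submission
  imports Defs
begin

definition agree :: "('v, 'f, 'a) fgraph \<Rightarrow> ('v, 'f) cstate \<Rightarrow> ('v, 'f) cstate \<Rightarrow> bool" where
  "agree G S T \<longleftrightarrow> fst S = fst T \<and> (\<forall>f\<in>ffacs G. \<forall>g\<in>ffacs G. snd S f g = snd T f g)"

lemma mem_mset_set_imp: "x \<in># mset_set A \<Longrightarrow> x \<in> A"
  by (cases "finite A") auto

lemma var_sig_cong:
  assumes "\<forall>f\<in>ffacs G. \<forall>g\<in>ffacs G. R1 f g = R2 f g"
  shows "var_sig G R1 v = var_sig G R2 v"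
  unfolding var_sig_def
proof (rule image_mset_cong)
  fix x assume "x \<in># mset_set {(f, i). f \<in> ffacs G \<and> i < length (fargs G f) \<and> fargs G f ! i = v}"
  then have "fst x \<in> ffacs G" by (auto dest: mem_mset_set_imp)
  then show "(case x of (f, i) \<Rightarrow> (fclass G R1 f, i)) = (case x of (f, i) \<Rightarrow> (fclass G R2 f, i))"
    using assms by (cases x) (auto simp: fclass_def)
qed

lemma agree_step: "agree G S T \<Longrightarrow> agree G (cp_step G S) (cp_step G T)"
proof -
  assume a: "agree G S T"
  obtain RV RF where S: "S = (RV, RF)" by (cases S)
  obtain RV2 RF2 where T: "T = (RV2, RF2)" by (cases T)
  have e: "RV2 = RV" and r: "\<forall>f\<in>ffacs G. \<forall>g\<in>ffacs G. RF f g = RF2 f g"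
    using a by (auto simp: agree_def S T)
  define RF' where "RF' = (\<lambda>f g. RF f g \<and> length (fargs G f) = length (fargs G g) \<and>
                   (\<forall>i < length (fargs G f). RV (fargs G f ! i) (fargs G g ! i)))"
  define RF2' where "RF2' = (\<lambda>f g. RF2 f g \<and> length (fargs G f) = length (fargs G g) \<and>
                   (\<forall>i < length (fargs G f). RV (fargs G f ! i) (fargs G g ! i)))"
  have r': "\<forall>f\<in>ffacs G. \<forall>g\<in>ffacs G. RF' f g = RF2' f g"
    using r by (auto simp: RF'_def RF2'_def)
  have vs: "\<And>v. var_sig G RF' v = var_sig G RF2' v" using var_sig_cong[OF r'] .
  show ?thesis
    unfolding agree_def cp_step_def S T e Let_def
    using r' vs by (simp add: RF'_def[symmetric] RF2'_def[symmetric])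
qed

lemma agree_iter: "agree G S T \<Longrightarrow> agree G ((cp_step G ^^ k) S) ((cp_step G ^^ k) T)"
  by (induction k) (auto intro: agree_step)

lemma agree_groupings: "agree G S T \<Longrightarrow> groupings G S = groupings G T"
  unfolding agree_def groupings_def partition_of_def
  by (auto intro!: image_cong)

lemma cp_cong:
  assumes "\<forall>f\<in>ffacs G. \<forall>g\<in>ffacs G. (c1 f = c1 g) = (c2 f = c2 g)"
  shows "colour_passing G E c1 = colour_passing G E c2"
proof -
  have a: "agree G (cp_init G E c1) (cp_init G E c2)"
    using assms by (simp add: agree_def cp_init_def)
  have g: "\<And>k. groupings G ((cp_step G ^^ k) (cp_init G E c1)) = groupings G ((cp_step G ^^ k) (cp_init G E c2))"
    by (rule agree_groupings[OF agree_iter[OF a]])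
  show ?thesis unfolding colour_passing_def Let_def g ..
qed

theorem mainTheorem2:
  fixes G :: "('v, 'f, 'a) fgraph" and E :: "('v, 'a) evidence" and \<theta> :: real
    and ord :: "'f list" and sel :: "'f \<Rightarrow> 'f set"
  assumes "wf_fg G E"
    and "\<forall>f \<in> ffacs G. fpot G f \<noteq> None"
    and "0 \<le> \<theta>" and "\<theta> \<le> 1"
    and "valid_order G ord" and "valid_sel G E sel"
  shows "LIFG G E \<theta> ord sel = CP G E"
proof -
  have "unknown_facs G = {}" using assms(2) by (auto simp: unknown_facs_def)
  then have o: "ord = []" using assms(5) by (simp add: valid_order_def)
  have "\<forall>f\<in>ffacs G. \<forall>g\<in>ffacs G. (lifg_col0 G f = lifg_col0 G g) = (fpot G f = fpot G g)"
    using assms(2) by (auto simp: lifg_col0_def split: option.splits)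
  then show ?thesis
    unfolding LIFG_def CP_def o by (simp add: cp_cong)
qed

end
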